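(* In the ladder model, the density $\rho_\infty$ of the stationary distribution of $(\Delta_n)_{n\ge0}$ satisfies $$\rho_\infty''(d)=-\bigl[2+e^{d}\bigr]\rho_\infty(d)+3\rho_\infty'(d)\quad (d<0),$$ $$\rho_\infty''(d)=-\bigl[2+e^{-d}\bigr]\rho_\infty(d)-3\rho_\infty'(d)\quad (d\ge0).$$
   Context: Ladder model $\mathcal{G}^{\{\mathcal{X},\mathcal{Y},\mathcal{Z}\}}$: for $n\ge0$, $G_n$ has vertex set $\{0,\dots,n\}\times\{0,1\}$ and edges: for $1\le i\le n$, an edge with weight $X_i$ joining $(i-1,0)$ and $(i,0)$, an edge with weight $Y_i$ joining $(i-1,1)$ and $(i,1)$; for $0\le i\le n$, an edge with weight $Z_i$ joining $(i,0)$ and $(i,1)$. All weights are independent standard exponential random variables. Path weight = sum of edge weights. $l_n$ ($l_n'$) is the minimal weight of a path in $G_n$ from $(0,0)$ to $(n,0)$ (to $(n,1)$), and $\Delta_n=l_n'-l_n$; $(\Delta_n)$ is an ergodic Markov chain given by $\Delta_0$ standard exponential and $\Delta_n=\min\{\Delta_{n-1}+Y_n,X_n+Z_n\}-\min\{X_n,\Delta_{n-1}+Y_n+Z_n\}$, and $\rho_\infty$ is the density of its unique stationary distribution. *)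

theory Defs
  imports "HOL-Probability.Probability"
begin

definition ladder_step :: "real \<Rightarrow> real \<Rightarrow> real \<Rightarrow> real \<Rightarrow> real" where
  "ladder_step d x y z = min (d + y) (x + z) - min x (d + y + z)"

definition Exp1 :: "real measure" where
  "Exp1 = density lborel (exponential_density 1)"

definition ladder_stationary :: "real measure \<Rightarrow> bool" where
  "ladder_stationary M \<longleftrightarrow> prob_space M \<and> sets M = sets borel \<and>
     distr (M \<Otimes>\<^sub>M (Exp1 \<Otimes>\<^sub>M (Exp1 \<Otimes>\<^sub>M Exp1))) borel
       (\<lambda>(d, x, y, z). ladder_step d x y z) = M"

definition ladder_stationary_density :: "(real \<Rightarrow> real) \<Rightarrow> bool" where
  "ladder_stationary_density \<rho> \<longleftrightarrow> \<rho> \<in> borel_measurable lborel \<and> (\<forall>x. 0 \<le> \<rho> x) \<and>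
     ladder_stationary (density lborel (\<lambda>x. ennreal (\<rho> x)))"

end

theory Submission
  imports Defs
begin


lemma exp_Ici:
  assumes "a > 0"
  shows "(\<integral>\<^sup>+x. ennreal (exp (-a*x)) * indicator {c..} x \<partial>lborel) = ennreal (exp (-a*c)/a)"
proof -
  have "integral\<^sup>N lborel (\<lambda>x. indicator {c..} x * exp (-a*x)) = exp (-a*c)/a"
    by (rule nn_integral_has_integral_lebesgue) (use has_integral_exp_minus_to_infinity[OF assms, of c] in auto)
  then show ?thesis
    by (simp add: mult.commute ennreal_mult' ennreal_indicator)
qed

lemma exp_Ici1: "(\<integral>\<^sup>+x. ennreal (exp (-x)) * indicator {c..} x \<partial>lborel) = ennreal (exp (-c))"
  using exp_Ici[of 1 c] by simp

definition ee :: "real \<Rightarrow> ennreal" where "ee z = ennreal (exp (-z)) * indicator {0..} z"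

lemma ee_meas[measurable]: "ee \<in> borel_measurable borel"
  unfolding ee_def by measurable

definition ll :: "real \<Rightarrow> real" where "ll u = exp (-\<bar>u\<bar>) / 2"

lemma ll_meas[measurable]: "ll \<in> borel_measurable borel"
  unfolding ll_def by measurable

lemma step_clamp: "z \<ge> 0 \<Longrightarrow> ladder_step d x y z = max (-z) (min z (d + y - x))"
  by (auto simp: ladder_step_def min_def max_def)

lemma zsplit:
  assumes [measurable]: "h \<in> borel_measurable borel"
  shows "(\<integral>\<^sup>+z. ee z * h (max (-z) (min z w)) \<partial>lborel) =
     ennreal (exp (-\<bar>w\<bar>)) * h w + (\<integral>\<^sup>+z. ee z * indicator {..<w} z * h z \<partial>lborel)
     + (\<integral>\<^sup>+z. ee z * indicator {..< -w} z * h (-z) \<partial>lborel)"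
proof -
  have pw: "ee z * h (max (-z) (min z w)) =
     (ennreal (exp (-z)) * indicator {\<bar>w\<bar>..} z * h w + ee z * indicator {..<w} z * h z)
     + ee z * indicator {..< -w} z * h (-z)" for z
    by (cases "z \<ge> 0"; cases "z < w"; cases "z < -w")
       (auto simp: ee_def indicator_def max_def min_def abs_if)
  have "(\<integral>\<^sup>+z. ee z * h (max (-z) (min z w)) \<partial>lborel) =
      (\<integral>\<^sup>+z. ennreal (exp (-z)) * indicator {\<bar>w\<bar>..} z * h w \<partial>lborel)
     + (\<integral>\<^sup>+z. ee z * indicator {..<w} z * h z \<partial>lborel)
     + (\<integral>\<^sup>+z. ee z * indicator {..< -w} z * h (-z) \<partial>lborel)"
    unfolding pw by (subst nn_integral_add; (subst nn_integral_add)?) auto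
  also have "(\<integral>\<^sup>+z. ennreal (exp (-z)) * indicator {\<bar>w\<bar>..} z * h w \<partial>lborel) =
      (\<integral>\<^sup>+z. ennreal (exp (-z)) * indicator {\<bar>w\<bar>..} z \<partial>lborel) * h w"
    by (rule nn_integral_multc) auto
  also have "\<dots> = ennreal (exp (-\<bar>w\<bar>)) * h w" by (simp add: exp_Ici1)
  finally show ?thesis .
qed

lemma ll_int: "(\<integral>\<^sup>+x. ee x * ee (u + x) \<partial>lborel) = ennreal (ll u)"
proof -
  define c where "c = max 0 (-u)"
  have "(\<integral>\<^sup>+x. ee x * ee (u + x) \<partial>lborel) =
        (\<integral>\<^sup>+x. ennreal (exp (-2*x)) * indicator {c..} x * ennreal (exp (-u)) \<partial>lborel)"
    by (rule nn_integral_cong)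
       (auto simp: ee_def c_def indicator_def ennreal_mult'[symmetric] exp_add[symmetric] algebra_simps)
  also have "\<dots> = (\<integral>\<^sup>+x. ennreal (exp (-2*x)) * indicator {c..} x \<partial>lborel) * ennreal (exp (-u))"
    by (rule nn_integral_multc) auto
  also have "\<dots> = ennreal (exp (-2*c)/2 * exp (-u))"
    using exp_Ici[of 2 c] by (simp add: ennreal_mult'[symmetric])
  also have "exp (-2*c)/2 * exp (-u) = ll u"
    by (auto simp: c_def ll_def max_def abs_if mult_exp_exp[symmetric]) (simp add: exp_add[symmetric] algebra_simps)?
  finally show ?thesis .
qed


lemma L1:
  assumes [measurable]: "F \<in> borel_measurable borel"
  shows "(\<integral>\<^sup>+x. ee x * (\<integral>\<^sup>+y. ee y * F (d + y - x) \<partial>lborel) \<partial>lborel) =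
         (\<integral>\<^sup>+w. ennreal (ll (w - d)) * F w \<partial>lborel)"
proof -
  have inner: "(\<integral>\<^sup>+y. ee y * F (d + y - x) \<partial>lborel) = (\<integral>\<^sup>+w. ee (w - d + x) * F w \<partial>lborel)" for x
    using nn_integral_real_affine[of "\<lambda>w. ee (w - d + x) * F w" 1 "d - x"]
    by (simp add: algebra_simps)
  have "(\<integral>\<^sup>+x. ee x * (\<integral>\<^sup>+y. ee y * F (d + y - x) \<partial>lborel) \<partial>lborel) =
        (\<integral>\<^sup>+x. (\<integral>\<^sup>+w. ee x * (ee (w - d + x) * F w) \<partial>lborel) \<partial>lborel)"
    unfolding inner by (rule nn_integral_cong) (rule nn_integral_cmult[symmetric], measurable)
  also have "\<dots> = (\<integral>\<^sup>+w. (\<integral>\<^sup>+x. ee x * (ee (w - d + x) * F w) \<partial>lborel) \<partial>lborel)"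
    by (rule lborel_pair.Fubini'[symmetric]) measurable
  also have "\<dots> = (\<integral>\<^sup>+w. (\<integral>\<^sup>+x. ee x * ee ((w - d) + x) \<partial>lborel) * F w \<partial>lborel)"
    by (rule nn_integral_cong, subst nn_integral_multc[symmetric]) (auto simp: mult.assoc)
  also have "\<dots> = (\<integral>\<^sup>+w. ennreal (ll (w - d)) * F w \<partial>lborel)"
    by (simp add: ll_int)
  finally show ?thesis .
qed

lemma half: "0 \<le> a \<Longrightarrow> ennreal (a/2) = ennreal a * ennreal (1/2)"
  by (subst ennreal_mult[symmetric]) auto

lemma U_nonneg: "u \<ge> 0 \<Longrightarrow> (\<integral>\<^sup>+v. ennreal (ll v) * indicator {u<..} v \<partial>lborel) = ennreal (exp (-u)/2)"
proof -
  assume u: "u \<ge> 0"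
  have "(\<integral>\<^sup>+v. ennreal (ll v) * indicator {u<..} v \<partial>lborel) =
        (\<integral>\<^sup>+v. ennreal (exp (-v)) * indicator {u..} v * ennreal (1/2) \<partial>lborel)"
    apply (rule nn_integral_cong_AE)
    using AE_lborel_singleton[of u]
    by eventually_elim (use u in \<open>auto simp: ll_def indicator_def half\<close>)
  also have "\<dots> = ennreal (exp (-u)) * ennreal (1/2)"
    by (subst nn_integral_multc) (auto simp: exp_Ici1)
  finally show ?thesis using half[of "exp (-u)"] by simp
qed

lemma L_nonpos: "u \<le> 0 \<Longrightarrow> (\<integral>\<^sup>+v. ennreal (ll v) * indicator {..u} v \<partial>lborel) = ennreal (exp u/2)"
proof -
  assume u: "u \<le> 0"
  have "(\<integral>\<^sup>+v. ennreal (ll v) * indicator {..u} v \<partial>lborel) =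
        (\<integral>\<^sup>+v. ennreal (ll (0 + (-1) * v)) * indicator {..u} (0 + (-1) * v) \<partial>lborel)"
    using nn_integral_real_affine[of "\<lambda>v. ennreal (ll v) * indicator {..u} v" "-1" 0] by simp
  also have "\<dots> = (\<integral>\<^sup>+v. ennreal (ll v) * indicator {-u<..} v \<partial>lborel)"
    apply (rule nn_integral_cong_AE)
    using AE_lborel_singleton[of "-u"]
    by eventually_elim (auto simp: ll_def indicator_def)
  also have "\<dots> = ennreal (exp u/2)" using U_nonneg[of "-u"] u by simp
  finally show ?thesis .
qed

lemma ll_total: "(\<integral>\<^sup>+v. ennreal (ll v) \<partial>lborel) = 1"
proof -
  have "(\<integral>\<^sup>+v. ennreal (ll v) \<partial>lborel) = (\<integral>\<^sup>+v. ennreal (ll v) * indicator {..0} v + ennreal (ll v) * indicator {0<..} v \<partial>lborel)"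
    by (rule nn_integral_cong) (auto simp: indicator_def)
  also have "\<dots> = ennreal (1/2) + ennreal (1/2)"
    by (subst nn_integral_add) (auto simp: L_nonpos[of 0] U_nonneg[of 0])
  also have "\<dots> = 1" by (subst ennreal_plus[symmetric]) auto
  finally show ?thesis .
qed

lemma ll_split: "(\<integral>\<^sup>+v. ennreal (ll v) * indicator {..u} v \<partial>lborel) + (\<integral>\<^sup>+v. ennreal (ll v) * indicator {u<..} v \<partial>lborel) = 1"
proof -
  have "(\<integral>\<^sup>+v. ennreal (ll v) * indicator {..u} v \<partial>lborel) + (\<integral>\<^sup>+v. ennreal (ll v) * indicator {u<..} v \<partial>lborel)
      = (\<integral>\<^sup>+v. ennreal (ll v) * indicator {..u} v + ennreal (ll v) * indicator {u<..} v \<partial>lborel)"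
    by (subst nn_integral_add) auto
  also have "\<dots> = (\<integral>\<^sup>+v. ennreal (ll v) \<partial>lborel)"
    by (rule nn_integral_cong) (auto simp: indicator_def)
  finally show ?thesis using ll_total by simp
qed

lemma ennreal_solve: "a + ennreal x = 1 \<Longrightarrow> 0 \<le> x \<Longrightarrow> a = ennreal (1 - x)"
proof -
  assume h: "a + ennreal x = 1" "0 \<le> x"
  have "a = a + ennreal x - ennreal x" by simp
  also have "\<dots> = ennreal 1 - ennreal x" using h by simp
  also have "\<dots> = ennreal (1 - x)" using h ennreal_minus[of x 1] by simp
  finally show ?thesis .
qed

definition Uf :: "real \<Rightarrow> real" where "Uf u = (if u \<ge> 0 then exp (-u)/2 else 1 - exp u/2)"
definition Lf :: "real \<Rightarrow> real" where "Lf u = (if u \<le> 0 then exp u/2 else 1 - exp (-u)/2)"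

lemma U_int: "(\<integral>\<^sup>+v. ennreal (ll v) * indicator {u<..} v \<partial>lborel) = ennreal (Uf u)"
proof (cases "u \<ge> 0")
  case True then show ?thesis by (simp add: U_nonneg Uf_def)
next
  case False
  then have "(\<integral>\<^sup>+v. ennreal (ll v) * indicator {u<..} v \<partial>lborel) = ennreal (1 - exp u/2)"
    using ll_split[of u] L_nonpos[of u] by (intro ennreal_solve) (auto simp: add.commute)
  then show ?thesis using False by (simp add: Uf_def)
qed

lemma L_int: "(\<integral>\<^sup>+v. ennreal (ll v) * indicator {..u} v \<partial>lborel) = ennreal (Lf u)"
proof (cases "u \<le> 0")
  case True then show ?thesis by (simp add: L_nonpos Lf_def)
next
  case False
  then have "(\<integral>\<^sup>+v. ennreal (ll v) * indicator {..u} v \<partial>lborel) = ennreal (1 - exp (-u)/2)"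
    using ll_split[of u] U_nonneg[of u] by (intro ennreal_solve) auto
  then show ?thesis using False by (simp add: Lf_def)
qed


definition KK :: "real \<Rightarrow> real \<Rightarrow> ennreal" where
  "KK d t = ennreal (ll (t - d)) * ennreal (exp (-\<bar>t\<bar>)) + ee t * ennreal (Uf (t - d)) + ee (-t) * ennreal (Lf (t - d))"

lemma Uf_meas[measurable]: "Uf \<in> borel_measurable borel" unfolding Uf_def by measurable
lemma Lf_meas[measurable]: "Lf \<in> borel_measurable borel" unfolding Lf_def by measurable

lemma KK_meas[measurable]: "case_prod KK \<in> borel_measurable (borel \<Otimes>\<^sub>M borel)"
  unfolding KK_def by measurable

lemma T2_meas[measurable]:
  assumes [measurable]: "h \<in> borel_measurable borel"
  shows "(\<lambda>w. \<integral>\<^sup>+z. ee z * indicator {..<w} z * h z \<partial>lborel) \<in> borel_measurable borel"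
proof -
  have "(\<lambda>(w,z). ee z * indicator {..<w} z * h z) \<in> borel_measurable (borel \<Otimes>\<^sub>M lborel)"
  proof -
    have "(\<lambda>(w,z). ee z * indicator {..<w} z * h z) = (\<lambda>(w::real,z::real). if z < w then ee z * h z else 0)"
      by (auto simp: indicator_def fun_eq_iff)
    also have "\<dots> \<in> borel_measurable (borel \<Otimes>\<^sub>M lborel)" by measurable
    finally show ?thesis .
  qed
  then show ?thesis by (rule lborel.borel_measurable_nn_integral)
qed

lemma T3_meas[measurable]:
  assumes [measurable]: "h \<in> borel_measurable borel"
  shows "(\<lambda>w. \<integral>\<^sup>+z. ee z * indicator {..< -w} z * h (-z) \<partial>lborel) \<in> borel_measurable borel"
proof -
  have "(\<lambda>(w,z). ee z * indicator {..< -w} z * h (-z)) \<in> borel_measurable (borel \<Otimes>\<^sub>M lborel)"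
  proof -
    have "(\<lambda>(w,z). ee z * indicator {..< -w} z * h (-z)) = (\<lambda>(w::real,z::real). if z < -w then ee z * h (-z) else 0)"
      by (auto simp: indicator_def fun_eq_iff)
    also have "\<dots> \<in> borel_measurable (borel \<Otimes>\<^sub>M lborel)" by measurable
    finally show ?thesis .
  qed
  then show ?thesis by (rule lborel.borel_measurable_nn_integral)
qed

lemma kernel:
  assumes [measurable]: "h \<in> borel_measurable borel"
  shows "(\<integral>\<^sup>+x. ee x * (\<integral>\<^sup>+y. ee y * (\<integral>\<^sup>+z. ee z * h (ladder_step d x y z) \<partial>lborel) \<partial>lborel) \<partial>lborel)
       = (\<integral>\<^sup>+t. KK d t * h t \<partial>lborel)"
proof -
  define HH where "HH w = ennreal (exp (-\<bar>w\<bar>)) * h w + (\<integral>\<^sup>+z. ee z * indicator {..<w} z * h z \<partial>lborel)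
     + (\<integral>\<^sup>+z. ee z * indicator {..< -w} z * h (-z) \<partial>lborel)" for w
  have HH_meas[measurable]: "HH \<in> borel_measurable borel"
    unfolding HH_def by measurable
  have inner: "(\<integral>\<^sup>+z. ee z * h (ladder_step d x y z) \<partial>lborel) = HH (d + y - x)" for x y
  proof -
    have "(\<integral>\<^sup>+z. ee z * h (ladder_step d x y z) \<partial>lborel) = (\<integral>\<^sup>+z. ee z * h (max (-z) (min z (d + y - x))) \<partial>lborel)"
      by (rule nn_integral_cong) (auto simp: ee_def step_clamp indicator_def)
    also have "\<dots> = HH (d + y - x)" unfolding HH_def by (rule zsplit) simp
    finally show ?thesis .
  qed
  have "(\<integral>\<^sup>+x. ee x * (\<integral>\<^sup>+y. ee y * (\<integral>\<^sup>+z. ee z * h (ladder_step d x y z) \<partial>lborel) \<partial>lborel) \<partial>lborel)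
      = (\<integral>\<^sup>+w. ennreal (ll (w - d)) * HH w \<partial>lborel)"
    unfolding inner by (rule L1) simp
  also have "\<dots> = (\<integral>\<^sup>+w. ennreal (ll (w - d)) * (ennreal (exp (-\<bar>w\<bar>)) * h w) \<partial>lborel)
       + (\<integral>\<^sup>+w. ennreal (ll (w - d)) * (\<integral>\<^sup>+z. ee z * indicator {..<w} z * h z \<partial>lborel) \<partial>lborel)
       + (\<integral>\<^sup>+w. ennreal (ll (w - d)) * (\<integral>\<^sup>+z. ee z * indicator {..< -w} z * h (-z) \<partial>lborel) \<partial>lborel)"
    unfolding HH_def distrib_left
    by (subst nn_integral_add; (subst nn_integral_add)?) auto
  also have "(\<integral>\<^sup>+w. ennreal (ll (w - d)) * (\<integral>\<^sup>+z. ee z * indicator {..<w} z * h z \<partial>lborel) \<partial>lborel)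
       = (\<integral>\<^sup>+t. ee t * ennreal (Uf (t - d)) * h t \<partial>lborel)"
  proof -
    have m: "(\<lambda>(w,z). ennreal (ll (w - d)) * (ee z * indicator {..<w} z * h z)) \<in> borel_measurable (lborel \<Otimes>\<^sub>M lborel)"
    proof -
      have "(\<lambda>(w,z). ennreal (ll (w - d)) * (ee z * indicator {..<w} z * h z)) =
         (\<lambda>(w::real,z::real). if z < w then ennreal (ll (w - d)) * (ee z * h z) else 0)"
        by (auto simp: indicator_def fun_eq_iff)
      also have "\<dots> \<in> borel_measurable (lborel \<Otimes>\<^sub>M lborel)" by measurable
      finally show ?thesis .
    qed
    have "(\<integral>\<^sup>+w. ennreal (ll (w - d)) * (\<integral>\<^sup>+z. ee z * indicator {..<w} z * h z \<partial>lborel) \<partial>lborel)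
        = (\<integral>\<^sup>+w. (\<integral>\<^sup>+z. ennreal (ll (w - d)) * (ee z * indicator {..<w} z * h z) \<partial>lborel) \<partial>lborel)"
      by (rule nn_integral_cong) (rule nn_integral_cmult[symmetric], measurable)
    also have "\<dots> = (\<integral>\<^sup>+z. (\<integral>\<^sup>+w. ennreal (ll (w - d)) * (ee z * indicator {..<w} z * h z) \<partial>lborel) \<partial>lborel)"
      using m by (rule lborel_pair.Fubini'[symmetric])
    also have "\<dots> = (\<integral>\<^sup>+z. (\<integral>\<^sup>+w. ennreal (ll (w - d)) * indicator {z<..} w \<partial>lborel) * (ee z * h z) \<partial>lborel)"
      by (rule nn_integral_cong, subst nn_integral_multc[symmetric])
         (auto intro!: nn_integral_cong simp: indicator_def)
    also have "\<dots> = (\<integral>\<^sup>+t. ee t * ennreal (Uf (t - d)) * h t \<partial>lborel)"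
    proof (rule nn_integral_cong)
      fix z :: real
      have "(\<integral>\<^sup>+w. ennreal (ll (w - d)) * indicator {z<..} w \<partial>lborel)
          = (\<integral>\<^sup>+v. ennreal (ll v) * indicator {z - d<..} v \<partial>lborel)"
        using nn_integral_real_affine[of "\<lambda>v. ennreal (ll v) * indicator {z - d<..} v" 1 "-d"]
        by (simp add: indicator_def)
      then show "(\<integral>\<^sup>+w. ennreal (ll (w - d)) * indicator {z<..} w \<partial>lborel) * (ee z * h z) = ee z * ennreal (Uf (z - d)) * h z"
        by (simp add: U_int mult_ac)
    qed
    finally show ?thesis .
  qed
  also have "(\<integral>\<^sup>+w. ennreal (ll (w - d)) * (\<integral>\<^sup>+z. ee z * indicator {..< -w} z * h (-z) \<partial>lborel) \<partial>lborel)
       = (\<integral>\<^sup>+t. ee (-t) * ennreal (Lf (t - d)) * h t \<partial>lborel)"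
  proof -
    have m: "(\<lambda>(w,z). ennreal (ll (w - d)) * (ee z * indicator {..< -w} z * h (-z))) \<in> borel_measurable (lborel \<Otimes>\<^sub>M lborel)"
    proof -
      have "(\<lambda>(w,z). ennreal (ll (w - d)) * (ee z * indicator {..< -w} z * h (-z))) =
         (\<lambda>(w::real,z::real). if z < -w then ennreal (ll (w - d)) * (ee z * h (-z)) else 0)"
        by (auto simp: indicator_def fun_eq_iff)
      also have "\<dots> \<in> borel_measurable (lborel \<Otimes>\<^sub>M lborel)" by measurable
      finally show ?thesis .
    qed
    have "(\<integral>\<^sup>+w. ennreal (ll (w - d)) * (\<integral>\<^sup>+z. ee z * indicator {..< -w} z * h (-z) \<partial>lborel) \<partial>lborel)
        = (\<integral>\<^sup>+w. (\<integral>\<^sup>+z. ennreal (ll (w - d)) * (ee z * indicator {..< -w} z * h (-z)) \<partial>lborel) \<partial>lborel)"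
      by (rule nn_integral_cong) (rule nn_integral_cmult[symmetric], measurable)
    also have "\<dots> = (\<integral>\<^sup>+z. (\<integral>\<^sup>+w. ennreal (ll (w - d)) * (ee z * indicator {..< -w} z * h (-z)) \<partial>lborel) \<partial>lborel)"
      using m by (rule lborel_pair.Fubini'[symmetric])
    also have "\<dots> = (\<integral>\<^sup>+z. (\<integral>\<^sup>+w. ennreal (ll (w - d)) * indicator {..< -z} w \<partial>lborel) * (ee z * h (-z)) \<partial>lborel)"
      by (rule nn_integral_cong, subst nn_integral_multc[symmetric])
         (auto intro!: nn_integral_cong simp: indicator_def)
    also have "\<dots> = (\<integral>\<^sup>+z. ee (- (-z)) * ennreal (Lf (-z - d)) * h (-z) \<partial>lborel)"
    proof (rule nn_integral_cong)
      fix z :: real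
      have "(\<integral>\<^sup>+w. ennreal (ll (w - d)) * indicator {..< -z} w \<partial>lborel)
          = (\<integral>\<^sup>+v. ennreal (ll v) * indicator {..< -z - d} v \<partial>lborel)"
        using nn_integral_real_affine[of "\<lambda>v. ennreal (ll v) * indicator {..< -z - d} v" 1 "-d"]
        by (simp add: indicator_def)
      also have "\<dots> = (\<integral>\<^sup>+v. ennreal (ll v) * indicator {.. -z - d} v \<partial>lborel)"
        apply (rule nn_integral_cong_AE)
        using AE_lborel_singleton[of "-z-d"]
        by eventually_elim (auto simp: indicator_def)
      finally show "(\<integral>\<^sup>+w. ennreal (ll (w - d)) * indicator {..< -z} w \<partial>lborel) * (ee z * h (-z)) = ee (- (-z)) * ennreal (Lf (-z - d)) * h (-z)"
        by (simp add: L_int mult_ac)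
    qed
    also have "\<dots> = (\<integral>\<^sup>+t. ee (-t) * ennreal (Lf (t - d)) * h t \<partial>lborel)"
      using nn_integral_real_affine[of "\<lambda>t. ee (-t) * ennreal (Lf (t - d)) * h t" "-1" 0] by simp
    finally show ?thesis .
  qed
  also have "(\<integral>\<^sup>+w. ennreal (ll (w - d)) * (ennreal (exp (-\<bar>w\<bar>)) * h w) \<partial>lborel)
      + (\<integral>\<^sup>+t. ee t * ennreal (Uf (t - d)) * h t \<partial>lborel)
      + (\<integral>\<^sup>+t. ee (-t) * ennreal (Lf (t - d)) * h t \<partial>lborel)
      = (\<integral>\<^sup>+t. KK d t * h t \<partial>lborel)"
    unfolding KK_def distrib_right
    by (subst nn_integral_add; (subst nn_integral_add)?) (auto simp: mult_ac)
  finally show ?thesis .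
qed


definition kr :: "real \<Rightarrow> real \<Rightarrow> real" where
  "kr d t = (if 0 \<le> t then exp (-t) * (indicator {..t} d * exp (d - t) + indicator {t<..} d)
             else exp t * (indicator {t<..} d * exp (t - d) + indicator {..t} d))"

lemma kr_nonneg: "0 \<le> kr d t"
  by (auto simp: kr_def indicator_def)

lemma kr_le1: "kr d t \<le> 1"
proof -
  have a: "exp (-t) \<le> 1" if "0 \<le> t" using that by simp
  have b: "exp t \<le> 1" if "\<not> 0 \<le> t" using that by simp
  show ?thesis
    unfolding kr_def indicator_def
    using a b by (auto intro!: mult_le_one)
qed

lemma kr_meas[measurable]: "case_prod kr \<in> borel_measurable (borel \<Otimes>\<^sub>M borel)"
proof -
  have "case_prod kr = (\<lambda>(d,t). if 0 \<le> t then exp (-t) * ((if d \<le> t then 1 else 0) * exp (d - t) + (if t < d then 1 else 0))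
             else exp t * ((if t < d then 1 else 0) * exp (t - d) + (if d \<le> t then 1 else 0)))"
    by (auto simp: fun_eq_iff kr_def indicator_def)
  also have "\<dots> \<in> borel_measurable (borel \<Otimes>\<^sub>M borel)" by measurable
  finally show ?thesis .
qed

lemma Uf_nonneg: "0 \<le> Uf u"
  unfolding Uf_def using exp_le_one_iff[of u] by (auto, linarith)
lemma Lf_nonneg: "0 \<le> Lf u"
  unfolding Lf_def using exp_le_one_iff[of "-u"] by (auto, linarith)

lemma KK_eq: "t \<noteq> 0 \<Longrightarrow> KK d t = ennreal (kr d t)"
proof -
  assume t: "t \<noteq> 0"
  have "KK d t = ennreal (ll (t - d) * exp (-\<bar>t\<bar>) + (if t \<ge> 0 then exp (-t) else 0) * Uf (t - d)
        + (if t \<le> 0 then exp t else 0) * Lf (t - d))"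
    unfolding KK_def ee_def using t Uf_nonneg[of "t-d"] Lf_nonneg[of "t-d"]
    by (simp add: ennreal_plus[symmetric] ennreal_mult[symmetric] ll_def indicator_def del: ennreal_plus)
  also have "\<dots> = ennreal (kr d t)"
  proof (cases "t > 0")
    case True
    then show ?thesis
      by (cases "d \<le> t")
         (auto simp: kr_def ll_def Uf_def indicator_def exp_diff exp_minus field_simps)
  next
    case False
    with t have "t < 0" by simp
    then show ?thesis
      by (cases "t < d")
         (auto simp: kr_def ll_def Lf_def indicator_def exp_diff exp_minus field_simps)
  qed
  finally show ?thesis .
qed


lemma Exp1_prob: "prob_space Exp1"
  unfolding Exp1_def by (rule prob_space_exponential_density) (rule zero_less_one)

lemma sets_Exp1[simp, measurable_cong]: "sets Exp1 = sets borel"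
  unfolding Exp1_def by (simp only: sets_density sets_lborel)

lemma nn_Exp1:
  assumes [measurable]: "f \<in> borel_measurable borel"
  shows "(\<integral>\<^sup>+x. f x \<partial>Exp1) = (\<integral>\<^sup>+x. ee x * f x \<partial>lborel)"
  unfolding Exp1_def
  by (subst nn_integral_density) (auto intro!: nn_integral_cong simp: ee_def exponential_density_def indicator_def)

lemma sigma_Exp1: "sigma_finite_measure Exp1"
  by (rule prob_space_imp_sigma_finite[OF Exp1_prob])

lemma sigma_Exp2: "sigma_finite_measure (Exp1 \<Otimes>\<^sub>M Exp1)"
  by (rule prob_space_imp_sigma_finite[OF prob_space_pair[OF Exp1_prob Exp1_prob]])

lemma sigma_Exp3: "sigma_finite_measure (Exp1 \<Otimes>\<^sub>M (Exp1 \<Otimes>\<^sub>M Exp1))"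
  by (rule prob_space_imp_sigma_finite[OF prob_space_pair[OF Exp1_prob prob_space_pair[OF Exp1_prob Exp1_prob]]])

lemma nn_Exp3:
  assumes [measurable]: "F \<in> borel_measurable (borel \<Otimes>\<^sub>M (borel \<Otimes>\<^sub>M borel))"
  shows "(\<integral>\<^sup>+q. F q \<partial>(Exp1 \<Otimes>\<^sub>M (Exp1 \<Otimes>\<^sub>M Exp1))) =
     (\<integral>\<^sup>+x. ee x * (\<integral>\<^sup>+y. ee y * (\<integral>\<^sup>+z. ee z * F (x,y,z) \<partial>lborel) \<partial>lborel) \<partial>lborel)"
proof -
  have "(\<integral>\<^sup>+q. F q \<partial>(Exp1 \<Otimes>\<^sub>M (Exp1 \<Otimes>\<^sub>M Exp1))) = (\<integral>\<^sup>+x. (\<integral>\<^sup>+q. F (x,q) \<partial>(Exp1 \<Otimes>\<^sub>M Exp1)) \<partial>Exp1)"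
    by (rule sigma_finite_measure.nn_integral_fst[OF sigma_Exp2, symmetric]) measurable
  also have "\<dots> = (\<integral>\<^sup>+x. (\<integral>\<^sup>+y. (\<integral>\<^sup>+z. F (x,y,z) \<partial>Exp1) \<partial>Exp1) \<partial>Exp1)"
    by (rule nn_integral_cong, rule sigma_finite_measure.nn_integral_fst[OF sigma_Exp1, symmetric]) measurable
  also have "\<dots> = (\<integral>\<^sup>+x. (\<integral>\<^sup>+y. (\<integral>\<^sup>+z. ee z * F (x,y,z) \<partial>lborel) \<partial>Exp1) \<partial>Exp1)"
    by (intro nn_integral_cong nn_Exp1) measurable
  also have "\<dots> = (\<integral>\<^sup>+x. (\<integral>\<^sup>+y. ee y * (\<integral>\<^sup>+z. ee z * F (x,y,z) \<partial>lborel) \<partial>lborel) \<partial>Exp1)"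
    by (intro nn_integral_cong nn_Exp1) measurable
  also have "\<dots> = (\<integral>\<^sup>+x. ee x * (\<integral>\<^sup>+y. ee y * (\<integral>\<^sup>+z. ee z * F (x,y,z) \<partial>lborel) \<partial>lborel) \<partial>lborel)"
    by (intro nn_Exp1) measurable
  finally show ?thesis .
qed

lemma distr_eq:
  fixes \<rho> :: "real \<Rightarrow> real"
  assumes [measurable]: "\<rho> \<in> borel_measurable borel"
  shows "distr (density lborel (\<lambda>x. ennreal (\<rho> x)) \<Otimes>\<^sub>M (Exp1 \<Otimes>\<^sub>M (Exp1 \<Otimes>\<^sub>M Exp1))) borel
       (\<lambda>(d, x, y, z). ladder_step d x y z) = density lborel (\<lambda>t. \<integral>\<^sup>+d. ennreal (\<rho> d) * KK d t \<partial>lborel)"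
    (is "distr ?N borel ?g = ?D")
proof (rule measure_eqI)
  have ls[measurable]: "(\<lambda>(d, x, y, z). ladder_step d x y z) \<in> borel_measurable (borel \<Otimes>\<^sub>M (borel \<Otimes>\<^sub>M (borel \<Otimes>\<^sub>M borel)))"
    unfolding ladder_step_def by measurable
  have setsN: "sets ?N = sets (borel \<Otimes>\<^sub>M (borel \<Otimes>\<^sub>M (borel \<Otimes>\<^sub>M borel)))"
    by (intro sets_pair_measure_cong) auto
  have g[measurable]: "?g \<in> borel_measurable ?N"
    using ls by (subst measurable_cong_sets[OF setsN refl])
  show "sets (distr ?N borel ?g) = sets ?D" by simp
  fix A assume "A \<in> sets (distr ?N borel ?g)"
  then have A[measurable]: "A \<in> sets borel" by simp
  have ls2: "(\<lambda>(d, q). indicator A (?g (d,q)) :: ennreal) \<in> borel_measurable (borel \<Otimes>\<^sub>M (Exp1 \<Otimes>\<^sub>M (Exp1 \<Otimes>\<^sub>M Exp1)))"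
  proof -
    have "sets (borel \<Otimes>\<^sub>M (Exp1 \<Otimes>\<^sub>M (Exp1 \<Otimes>\<^sub>M Exp1))) = sets (borel \<Otimes>\<^sub>M (borel \<Otimes>\<^sub>M (borel \<Otimes>\<^sub>M borel)))"
      by (intro sets_pair_measure_cong) auto
    moreover have "(\<lambda>(d, q). indicator A (?g (d,q)) :: ennreal) \<in> borel_measurable (borel \<Otimes>\<^sub>M (borel \<Otimes>\<^sub>M (borel \<Otimes>\<^sub>M borel)))"
      using ls by measurable
    ultimately show ?thesis by (subst measurable_cong_sets[OF _ refl]) 
  qed
  have KKA2: "(\<lambda>(d,t). ennreal (\<rho> d) * (KK d t * indicator A t)) \<in> borel_measurable (lborel \<Otimes>\<^sub>M lborel)"
  proof -
    have "sets (lborel \<Otimes>\<^sub>M lborel) = sets (borel \<Otimes>\<^sub>M (borel :: real measure))"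
      by (intro sets_pair_measure_cong) auto
    moreover have "(\<lambda>(d,t). ennreal (\<rho> d) * (KK d t * indicator A t)) \<in> borel_measurable (borel \<Otimes>\<^sub>M (borel :: real measure))"
      by measurable
    ultimately show ?thesis by (subst measurable_cong_sets[OF _ refl])
  qed
  have KKA: "(\<lambda>t. KK d t * indicator A t) \<in> borel_measurable lborel" for d
    by measurable
  have Dm: "(\<lambda>t. \<integral>\<^sup>+d. ennreal (\<rho> d) * KK d t \<partial>lborel) \<in> borel_measurable lborel"
  proof -
    have "sets (borel \<Otimes>\<^sub>M lborel) = sets (borel \<Otimes>\<^sub>M (borel :: real measure))"
      by (intro sets_pair_measure_cong) auto
    moreover have "(\<lambda>(t,d). ennreal (\<rho> d) * KK d t) \<in> borel_measurable (borel \<Otimes>\<^sub>M (borel :: real measure))"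
      by measurable
    ultimately have "(\<lambda>(t,d). ennreal (\<rho> d) * KK d t) \<in> borel_measurable (borel \<Otimes>\<^sub>M lborel)"
      by (subst measurable_cong_sets[OF _ refl])
    then show ?thesis using lborel.borel_measurable_nn_integral[of "\<lambda>t d. ennreal (\<rho> d) * KK d t" borel] by simp
  qed
  have meas_d: "(\<lambda>d. \<integral>\<^sup>+q. indicator A (?g (d,q)) \<partial>(Exp1 \<Otimes>\<^sub>M (Exp1 \<Otimes>\<^sub>M Exp1))) \<in> borel_measurable lborel"
    using sigma_finite_measure.borel_measurable_nn_integral[OF sigma_Exp3 ls2] by simp
  have "emeasure (distr ?N borel ?g) A = (\<integral>\<^sup>+t. indicator A t \<partial>distr ?N borel ?g)"
    by (rule nn_integral_indicator[symmetric]) simp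
  also have "\<dots> = (\<integral>\<^sup>+p. indicator A (?g p) \<partial>?N)"
    by (rule nn_integral_distr) auto
  also have "\<dots> = (\<integral>\<^sup>+d. (\<integral>\<^sup>+q. indicator A (?g (d,q)) \<partial>(Exp1 \<Otimes>\<^sub>M (Exp1 \<Otimes>\<^sub>M Exp1))) \<partial>density lborel (\<lambda>x. ennreal (\<rho> x)))"
    by (rule sigma_finite_measure.nn_integral_fst[OF sigma_Exp3, symmetric]) (use g in simp)
  also have "\<dots> = (\<integral>\<^sup>+d. ennreal (\<rho> d) * (\<integral>\<^sup>+q. indicator A (?g (d,q)) \<partial>(Exp1 \<Otimes>\<^sub>M (Exp1 \<Otimes>\<^sub>M Exp1))) \<partial>lborel)"
    using meas_d by (intro nn_integral_density) auto
  also have "\<dots> = (\<integral>\<^sup>+d. ennreal (\<rho> d) * (\<integral>\<^sup>+t. KK d t * indicator A t \<partial>lborel) \<partial>lborel)"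
  proof (rule nn_integral_cong)
    fix d
    have ls_d: "(\<lambda>q. indicator A (?g (d,q)) :: ennreal) \<in> borel_measurable (borel \<Otimes>\<^sub>M (borel \<Otimes>\<^sub>M borel))"
    proof -
      have "(\<lambda>q. indicator A (?g (d,q)) :: ennreal) = (\<lambda>(x,y,z). indicator A (ladder_step d x y z))"
        by auto
      also have "\<dots> \<in> borel_measurable (borel \<Otimes>\<^sub>M (borel \<Otimes>\<^sub>M borel))"
        unfolding ladder_step_def by measurable
      finally show ?thesis .
    qed
    have "(\<integral>\<^sup>+q. indicator A (?g (d,q)) \<partial>(Exp1 \<Otimes>\<^sub>M (Exp1 \<Otimes>\<^sub>M Exp1))) =
      (\<integral>\<^sup>+x. ee x * (\<integral>\<^sup>+y. ee y * (\<integral>\<^sup>+z. ee z * indicator A (ladder_step d x y z) \<partial>lborel) \<partial>lborel) \<partial>lborel)"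
      using nn_Exp3[OF ls_d] by simp
    also have "\<dots> = (\<integral>\<^sup>+t. KK d t * indicator A t \<partial>lborel)"
      by (rule kernel) simp
    finally show "ennreal (\<rho> d) * (\<integral>\<^sup>+q. indicator A (?g (d,q)) \<partial>(Exp1 \<Otimes>\<^sub>M (Exp1 \<Otimes>\<^sub>M Exp1))) =
        ennreal (\<rho> d) * (\<integral>\<^sup>+t. KK d t * indicator A t \<partial>lborel)" by simp
  qed
  also have "\<dots> = (\<integral>\<^sup>+d. (\<integral>\<^sup>+t. ennreal (\<rho> d) * (KK d t * indicator A t) \<partial>lborel) \<partial>lborel)"
    by (rule nn_integral_cong) (rule nn_integral_cmult[symmetric], simp add: KKA)
  also have "\<dots> = (\<integral>\<^sup>+t. (\<integral>\<^sup>+d. ennreal (\<rho> d) * (KK d t * indicator A t) \<partial>lborel) \<partial>lborel)"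
    by (rule lborel_pair.Fubini'[symmetric]) (simp add: KKA2)
  also have "\<dots> = (\<integral>\<^sup>+t. (\<integral>\<^sup>+d. ennreal (\<rho> d) * KK d t \<partial>lborel) * indicator A t \<partial>lborel)"
    by (rule nn_integral_cong) (subst nn_integral_multc[symmetric], measurable, simp add: mult.assoc)
  also have "\<dots> = emeasure ?D A"
    by (rule emeasure_density[symmetric]) (use Dm in auto)
  finally show "emeasure (distr ?N borel ?g) A = emeasure ?D A" .
qed


lemma ftc_K:
  fixes f g :: "real \<Rightarrow> real"
  assumes fm[measurable]: "f \<in> borel_measurable borel"
    and fi: "set_integrable lborel {a..b} f"
    and ae: "AE s in lborel. f s = g s"
  shows ftc_K_cont: "continuous_on {a..b} (\<lambda>u. \<integral> s. f s * indicator {a<..u} s \<partial>lborel)"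
    and ftc_K_deriv: "t \<in> {a..b} \<Longrightarrow> continuous (at t within {a..b}) g \<Longrightarrow>
      ((\<lambda>u. \<integral> s. f s * indicator {a<..u} s \<partial>lborel) has_real_derivative g t) (at t within {a..b})"
proof -
  from ae obtain N where N: "{x \<in> space lborel. \<not> f x = g x} \<subseteq> N" "emeasure lborel N = 0" "N \<in> sets lborel"
    by (rule AE_E)
  have fg: "\<And>x. x \<notin> N \<Longrightarrow> f x = g x"
    using N(1) by (auto simp: subset_iff)
  have negN: "negligible N"
    unfolding negligible_iff_null_sets
    by (rule null_sets_completionI) (use N in \<open>auto intro: null_setsI\<close>)
  have eq: "(\<integral> s. f s * indicator {a<..u} s \<partial>lborel) = integral {a..u} g" if u: "u \<in> {a..b}" for u
  proof -
    have si: "set_integrable lborel {a..u} f"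
      by (rule set_integrable_subset[OF fi]) (use u in auto)
    have "(\<integral> s. f s * indicator {a<..u} s \<partial>lborel) = (\<integral> s. indicator {a..u} s *\<^sub>R f s \<partial>lborel)"
      apply (rule integral_cong_AE)
        apply measurable
      using AE_lborel_singleton[of a] by eventually_elim (auto simp: indicator_def)
    also have "\<dots> = integral {a..u} f"
      using set_borel_integral_eq_integral(2)[OF si] by (simp add: set_lebesgue_integral_def)
    also have "\<dots> = integral {a..u} g"
      by (rule integral_spike[OF negN]) (use fg in force)
    finally show ?thesis .
  qed
  have gi: "g integrable_on {a..b}"
    by (rule integrable_spike[OF set_borel_integral_eq_integral(1)[OF fi] negN]) (use fg in force)
  show "continuous_on {a..b} (\<lambda>u. \<integral> s. f s * indicator {a<..u} s \<partial>lborel)"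
    using indefinite_integral_continuous_1[OF gi] by (rule continuous_on_eq) (simp add: eq)
  assume t: "t \<in> {a..b}" and c: "continuous (at t within {a..b}) g"
  have "((\<lambda>u. integral {a..u} g) has_vector_derivative g t) (at t within {a..b} - {})"
    by (rule integral_has_vector_derivative_continuous_at) (use gi t c in auto)
  then have "((\<lambda>u. integral {a..u} g) has_real_derivative g t) (at t within {a..b})"
    by (simp add: has_real_derivative_iff_has_vector_derivative)
  then show "((\<lambda>u. \<integral> s. f s * indicator {a<..u} s \<partial>lborel) has_real_derivative g t) (at t within {a..b})"
    by (rule has_field_derivative_transform_within[where d=1]) (use t eq in auto)
qed


lemma bint:
  fixes \<rho> h :: "real \<Rightarrow> real"
  assumes "integrable lborel \<rho>" "h \<in> borel_measurable borel" "\<And>s. \<bar>h s\<bar> \<le> C"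
  shows "integrable lborel (\<lambda>s. \<rho> s * h s)"
proof (rule Bochner_Integration.integrable_bound[where f="\<lambda>s. C * \<rho> s"])
  show "integrable lborel (\<lambda>s. C * \<rho> s)" using assms(1) by simp
  show "(\<lambda>s. \<rho> s * h s) \<in> borel_measurable lborel"
    using assms(1,2) by (auto simp: borel_measurable_integrable)
  show "AE x in lborel. norm (\<rho> x * h x) \<le> norm (C * \<rho> x)"
  proof
    fix x
    have "\<bar>h x\<bar> \<le> \<bar>C\<bar>" using assms(3)[of x] by linarith
    then show "norm (\<rho> x * h x) \<le> norm (C * \<rho> x)"
      by (simp add: abs_mult) (metis abs_ge_zero mult.commute mult_left_mono)
  qed
qed

lemma int_add_eq:
  fixes f g h :: "real \<Rightarrow> real"
  assumes "integrable lborel f" "integrable lborel g" "\<And>x. h x = f x + g x"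
  shows "integral\<^sup>L lborel h = integral\<^sup>L lborel f + integral\<^sup>L lborel g"
proof -
  have "h = (\<lambda>x. f x + g x)" using assms(3) by auto
  then show ?thesis using assms(1,2) by simp
qed

locale dens =
  fixes \<rho> :: "real \<Rightarrow> real"
  assumes meas[measurable]: "\<rho> \<in> borel_measurable borel"
    and int: "integrable lborel \<rho>"
begin

definition "PP t = (\<integral> s. \<rho> s * indicator {..t} s \<partial>lborel)"
definition "QQ t = (\<integral> s. \<rho> s * indicator {t<..} s \<partial>lborel)"
definition "E1 t = (\<integral> s. \<rho> s * (exp s * indicator {..t} s) \<partial>lborel)"
definition "E2 t = (\<integral> s. \<rho> s * (exp (-s) * indicator {t<..} s) \<partial>lborel)"
definition "R0 t = (\<integral> d. \<rho> d * kr d t \<partial>lborel)"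
definition "KA a u = (\<integral> s. \<rho> s * indicator {a<..u} s \<partial>lborel)"
definition "KB a u = (\<integral> s. (\<rho> s * exp s) * indicator {a<..u} s \<partial>lborel)"
definition "KC a u = (\<integral> s. (\<rho> s * exp (-s)) * indicator {a<..u} s \<partial>lborel)"

lemma i_ind: "A \<in> sets borel \<Longrightarrow> integrable lborel (\<lambda>s. \<rho> s * indicator A s)"
  by (rule bint[OF int, where C=1]) (auto simp: indicator_def)

lemma i_E1: "integrable lborel (\<lambda>s. \<rho> s * (exp s * indicator {..t} s))"
  by (rule bint[OF int, where C="exp t"]) (auto simp: indicator_def)

lemma i_E2: "integrable lborel (\<lambda>s. \<rho> s * (exp (-s) * indicator {t<..} s))"
  by (rule bint[OF int, where C="exp (-t)"]) (auto simp: indicator_def)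

lemma i_KB: "integrable lborel (\<lambda>s. (\<rho> s * exp s) * indicator {a<..u} s)"
  using bint[OF int, where C="exp u" and h="\<lambda>s. exp s * indicator {a<..u} s"]
  by (auto simp: indicator_def mult.assoc)

lemma i_KC: "integrable lborel (\<lambda>s. (\<rho> s * exp (-s)) * indicator {a<..u} s)"
  using bint[OF int, where C="exp (-a)" and h="\<lambda>s. exp (-s) * indicator {a<..u} s"]
  by (auto simp: indicator_def mult.assoc)

lemma R0_pos: "0 \<le> t \<Longrightarrow> R0 t = exp (-t) * (exp (-t) * E1 t + QQ t)"
proof -
  assume t: "0 \<le> t"
  have "R0 t = (\<integral> d. exp (-t) * exp (-t) * (\<rho> d * (exp d * indicator {..t} d)) + exp (-t) * (\<rho> d * indicator {t<..} d) \<partial>lborel)"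
    unfolding R0_def
    by (rule Bochner_Integration.integral_cong) (auto simp: kr_def t exp_diff exp_minus field_simps indicator_def)
  also have "\<dots> = exp (-t) * exp (-t) * E1 t + exp (-t) * QQ t"
    unfolding E1_def QQ_def
    by (subst int_add_eq[OF _ _ refl]) (auto intro: i_E1 i_ind)
  finally show ?thesis by (simp add: algebra_simps)
qed

lemma R0_neg: "t < 0 \<Longrightarrow> R0 t = exp t * (exp t * E2 t + PP t)"
proof -
  assume t: "t < 0"
  have "R0 t = (\<integral> d. exp t * exp t * (\<rho> d * (exp (-d) * indicator {t<..} d)) + exp t * (\<rho> d * indicator {..t} d) \<partial>lborel)"
    unfolding R0_def
    by (rule Bochner_Integration.integral_cong) (use t in \<open>auto simp: kr_def exp_diff exp_minus field_simps indicator_def\<close>)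
  also have "\<dots> = exp t * exp t * E2 t + exp t * PP t"
    unfolding E2_def PP_def
    by (subst int_add_eq[OF _ _ refl]) (auto intro: i_E2 i_ind)
  finally show ?thesis by (simp add: algebra_simps)
qed

lemma PP_win: "a \<le> u \<Longrightarrow> PP u = PP a + KA a u"
  unfolding PP_def KA_def
  by (rule int_add_eq[OF i_ind[of "{..a}"] i_ind[of "{a<..u}"]]) (auto simp: indicator_def)

lemma QQ_win: "a \<le> u \<Longrightarrow> QQ u = QQ a - KA a u"
proof -
  assume au: "a \<le> u"
  have "QQ a = QQ u + KA a u"
    unfolding QQ_def KA_def
    by (rule int_add_eq[OF i_ind[of "{u<..}"] i_ind[of "{a<..u}"]]) (use au in \<open>auto simp: indicator_def\<close>)
  then show ?thesis by simp
qed

lemma E1_win: "a \<le> u \<Longrightarrow> E1 u = E1 a + KB a u"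
  unfolding E1_def KB_def
  by (rule int_add_eq[OF i_E1[of a] i_KB[of a u]]) (auto simp: indicator_def)

lemma E2_win: "a \<le> u \<Longrightarrow> E2 u = E2 a - KC a u"
proof -
  assume au: "a \<le> u"
  have "E2 a = E2 u + KC a u"
    unfolding E2_def KC_def
    by (rule int_add_eq[OF i_E2[of u] i_KC[of a u]]) (use au in \<open>auto simp: indicator_def\<close>)
  then show ?thesis by simp
qed

end


locale dens2 = dens +
  assumes ae: "AE s in lborel. \<rho> s = R0 s"
begin

definition "R1 u = (if 0 \<le> u then - exp (-u) * (2 * exp (-u) * E1 u + QQ u) else exp u * (2 * exp u * E2 u + PP u))"
definition "R2 u = (if 0 \<le> u then exp (-u) * (4 * exp (-u) * E1 u + QQ u - R0 u) else exp u * (4 * exp u * E2 u + PP u - R0 u))"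

lemma si_rho: "set_integrable lborel {a..b} \<rho>"
  unfolding set_integrable_def using i_ind[of "{a..b}"] by (simp add: mult.commute)

lemma si_rho_exp: "set_integrable lborel {a..b} (\<lambda>s. \<rho> s * exp s)"
  unfolding set_integrable_def
  using bint[OF int, where C="exp b" and h="\<lambda>s. exp s * indicator {a..b} s"]
  by (auto simp: indicator_def mult_ac)

lemma si_rho_mexp: "set_integrable lborel {a..b} (\<lambda>s. \<rho> s * exp (-s))"
  unfolding set_integrable_def
  using bint[OF int, where C="exp (-a)" and h="\<lambda>s. exp (-s) * indicator {a..b} s"]
  by (auto simp: indicator_def mult_ac)

lemma ae_exp: "AE s in lborel. \<rho> s * exp s = R0 s * exp s"
  using ae by eventually_elim simp
lemma ae_mexp: "AE s in lborel. \<rho> s * exp (-s) = R0 s * exp (-s)"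
  using ae by eventually_elim simp

lemma pos_case:
  assumes t: "0 \<le> t"
  shows "(R0 has_real_derivative R1 t) (at t within {0..})"
    "(R1 has_real_derivative R2 t) (at t within {0..})"
proof -
  define W where "W = {0..t+1}"
  have tW: "t \<in> W" using t by (simp add: W_def)
  have R0W: "R0 u = exp (-u) * (exp (-u) * (E1 0 + KB 0 u) + (QQ 0 - KA 0 u))" if "u \<in> W" for u
    using that R0_pos[of u] E1_win[of 0 u] QQ_win[of 0 u] by (simp add: W_def)
  have R1W: "R1 u = - exp (-u) * (2 * exp (-u) * (E1 0 + KB 0 u) + (QQ 0 - KA 0 u))" if "u \<in> W" for u
    using that E1_win[of 0 u] QQ_win[of 0 u] by (simp add: W_def R1_def)
  have cA: "continuous_on W (KA 0)"
    unfolding W_def KA_def by (rule ftc_K_cont[OF meas si_rho ae])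
  have cB: "continuous_on W (KB 0)"
    unfolding W_def KB_def by (rule ftc_K_cont[OF _ si_rho_exp ae_exp]) measurable
  have "continuous_on W (\<lambda>u. exp (-u) * (exp (-u) * (E1 0 + KB 0 u) + (QQ 0 - KA 0 u)))"
    by (intro continuous_intros cA cB)
  then have cR0: "continuous_on W R0"
    by (rule continuous_on_eq) (simp add: R0W)
  then have cR0t: "continuous (at t within W) R0"
    using tW continuous_on_eq_continuous_within by blast
  have dA: "(KA 0 has_real_derivative R0 t) (at t within W)"
    unfolding W_def KA_def by (rule ftc_K_deriv[OF meas si_rho ae]) (use tW cR0t in \<open>auto simp: W_def\<close>)
  have cR0e: "continuous (at t within W) (\<lambda>s. R0 s * exp s)"
    by (intro continuous_intros cR0t)
  have dB: "(KB 0 has_real_derivative R0 t * exp t) (at t within W)"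
    unfolding W_def KB_def by (rule ftc_K_deriv[OF _ si_rho_exp ae_exp]) (use tW cR0e in \<open>auto simp: W_def\<close>)
  have e1: "exp (-t) * exp t = 1" by (simp add: exp_minus_inverse mult.commute)
  have e2: "exp t * (x * (exp (- t) * exp (- t))) = x * exp (-t)" for x
    by (simp add: exp_minus field_simps)
  have "((\<lambda>u. exp (-u) * (exp (-u) * (E1 0 + KB 0 u) + (QQ 0 - KA 0 u))) has_real_derivative R1 t) (at t within W)"
    apply (rule derivative_eq_intros dA dB refl | simp)+
    using E1_win[of 0 t] QQ_win[of 0 t] t by (simp add: R1_def exp_minus field_simps) (simp add: distrib_left[symmetric])
  then have d0W: "(R0 has_real_derivative R1 t) (at t within W)"
    by (rule has_field_derivative_transform_within[where d=1]) (use tW R0W in auto)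
  have "((\<lambda>u. - exp (-u) * (2 * exp (-u) * (E1 0 + KB 0 u) + (QQ 0 - KA 0 u))) has_real_derivative R2 t) (at t within W)"
    apply (rule derivative_eq_intros dA dB refl | simp)+
    using E1_win[of 0 t] QQ_win[of 0 t] t by (simp add: R2_def exp_minus field_simps) (simp add: distrib_left[symmetric])
  then have d1W: "(R1 has_real_derivative R2 t) (at t within W)"
    by (rule has_field_derivative_transform_within[where d=1]) (use tW R1W in auto)
  have atW: "at t within W = at t within {0..}"
    unfolding W_def by (rule at_within_nhd[of _ "{..<t+1}"]) auto
  show "(R0 has_real_derivative R1 t) (at t within {0..})" using d0W atW by simp
  show "(R1 has_real_derivative R2 t) (at t within {0..})" using d1W atW by simp
qed


lemma neg_case:
  assumes t: "t < 0"
  shows "(R0 has_real_derivative R1 t) (at t)"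
    "(R1 has_real_derivative R2 t) (at t)"
proof -
  define a where "a = t - 1"
  define W where "W = {a..t/2}"
  have tW: "t \<in> W" using t by (simp add: W_def a_def)
  have R0W: "R0 u = exp u * (exp u * (E2 a - KC a u) + (PP a + KA a u))" if "u \<in> W" for u
    using that t R0_neg[of u] E2_win[of a u] PP_win[of a u] by (simp add: W_def)
  have R1W: "R1 u = exp u * (2 * exp u * (E2 a - KC a u) + (PP a + KA a u))" if "u \<in> W" for u
    using that t E2_win[of a u] PP_win[of a u] by (simp add: W_def R1_def)
  have cA: "continuous_on W (KA a)"
    unfolding W_def KA_def by (rule ftc_K_cont[OF meas si_rho ae])
  have cC: "continuous_on W (KC a)"
    unfolding W_def KC_def by (rule ftc_K_cont[OF _ si_rho_mexp ae_mexp]) measurable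
  have "continuous_on W (\<lambda>u. exp u * (exp u * (E2 a - KC a u) + (PP a + KA a u)))"
    by (intro continuous_intros cA cC)
  then have cR0: "continuous_on W R0"
    by (rule continuous_on_eq) (simp add: R0W)
  then have cR0t: "continuous (at t within W) R0"
    using tW continuous_on_eq_continuous_within by blast
  have dA: "(KA a has_real_derivative R0 t) (at t within W)"
    unfolding W_def KA_def by (rule ftc_K_deriv[OF meas si_rho ae]) (use tW cR0t in \<open>auto simp: W_def\<close>)
  have cR0e: "continuous (at t within W) (\<lambda>s. R0 s * exp (-s))"
    by (intro continuous_intros cR0t)
  have dC: "(KC a has_real_derivative R0 t * exp (-t)) (at t within W)"
    unfolding W_def KC_def by (rule ftc_K_deriv[OF _ si_rho_mexp ae_mexp]) (use tW cR0e in \<open>auto simp: W_def\<close>)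
  have E2a: "E2 a = E2 t + KC a t" using E2_win[of a t] t by (simp add: a_def)
  have PPt: "PP t = PP a + KA a t" using PP_win[of a t] t by (simp add: a_def)
  have "((\<lambda>u. exp u * (exp u * (E2 a - KC a u) + (PP a + KA a u))) has_real_derivative R1 t) (at t within W)"
    apply (rule derivative_eq_intros dA dC refl | simp)+
    using t by (simp add: PPt E2a R1_def exp_minus field_simps)
  then have d0W: "(R0 has_real_derivative R1 t) (at t within W)"
    by (rule has_field_derivative_transform_within[where d=1]) (use tW R0W in auto)
  have "((\<lambda>u. exp u * (2 * exp u * (E2 a - KC a u) + (PP a + KA a u))) has_real_derivative R2 t) (at t within W)"
    apply (rule derivative_eq_intros dA dC refl | simp)+
    using t by (simp add: PPt E2a R2_def exp_minus field_simps)
  then have d1W: "(R1 has_real_derivative R2 t) (at t within W)"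
    by (rule has_field_derivative_transform_within[where d=1]) (use tW R1W in auto)
  have atW: "at t within W = at t"
    by (rule at_within_interior) (use t in \<open>simp add: W_def a_def\<close>)
  show "(R0 has_real_derivative R1 t) (at t)" using d0W atW by simp
  show "(R1 has_real_derivative R2 t) (at t)" using d1W atW by simp
qed

lemma ode_pos: "0 \<le> d \<Longrightarrow> R2 d = - (2 + exp (- d)) * R0 d - 3 * R1 d"
  by (simp add: R2_def R1_def R0_pos algebra_simps)

lemma ode_neg: "d < 0 \<Longrightarrow> R2 d = - (2 + exp d) * R0 d + 3 * R1 d"
  by (simp add: R2_def R1_def R0_neg algebra_simps)

end


lemma Dens_meas:
  fixes \<rho> :: "real \<Rightarrow> real"
  assumes [measurable]: "\<rho> \<in> borel_measurable borel"
  shows "(\<lambda>t. \<integral>\<^sup>+d. ennreal (\<rho> d) * KK d t \<partial>lborel) \<in> borel_measurable lborel"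
proof -
  have "sets (borel \<Otimes>\<^sub>M lborel) = sets (borel \<Otimes>\<^sub>M (borel :: real measure))"
    by (intro sets_pair_measure_cong) auto
  moreover have "(\<lambda>(t,d). ennreal (\<rho> d) * KK d t) \<in> borel_measurable (borel \<Otimes>\<^sub>M (borel :: real measure))"
    by measurable
  ultimately have "(\<lambda>(t,d). ennreal (\<rho> d) * KK d t) \<in> borel_measurable (borel \<Otimes>\<^sub>M lborel)"
    by (subst measurable_cong_sets[OF _ refl])
  then show ?thesis using lborel.borel_measurable_nn_integral[of "\<lambda>t d. ennreal (\<rho> d) * KK d t" borel] by simp
qed

theorem mainTheorem7:
  fixes \<rho> :: "real \<Rightarrow> real"
  assumes "ladder_stationary_density \<rho>"
  shows "\<exists>\<rho>0 \<rho>1 \<rho>2 :: real \<Rightarrow> real.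
    (AE d in lborel. \<rho> d = \<rho>0 d) \<and>
    (\<forall>d::real. d < 0 \<longrightarrow>
       (\<rho>0 has_real_derivative \<rho>1 d) (at d) \<and>
       (\<rho>1 has_real_derivative \<rho>2 d) (at d) \<and>
       \<rho>2 d = - (2 + exp d) * \<rho>0 d + 3 * \<rho>1 d) \<and>
    (\<forall>d::real. d \<ge> 0 \<longrightarrow>
       (\<rho>0 has_real_derivative \<rho>1 d) (at d within {0..}) \<and>
       (\<rho>1 has_real_derivative \<rho>2 d) (at d within {0..}) \<and>
       \<rho>2 d = - (2 + exp (- d)) * \<rho>0 d - 3 * \<rho>1 d)"
proof -
  have m0: "\<rho> \<in> borel_measurable lborel" and nn: "\<And>x. 0 \<le> \<rho> x"
    and st: "ladder_stationary (density lborel (\<lambda>x. ennreal (\<rho> x)))"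
    using assms unfolding ladder_stationary_density_def by auto
  have m[measurable]: "\<rho> \<in> borel_measurable borel" using m0 by simp
  let ?M = "density lborel (\<lambda>x. ennreal (\<rho> x))"
  have ps: "prob_space ?M" and de: "distr (?M \<Otimes>\<^sub>M (Exp1 \<Otimes>\<^sub>M (Exp1 \<Otimes>\<^sub>M Exp1))) borel
       (\<lambda>(d, x, y, z). ladder_step d x y z) = ?M"
    using st unfolding ladder_stationary_def by auto
  have "emeasure ?M (space ?M) = 1" using ps by (rule prob_space.emeasure_space_1)
  then have one: "(\<integral>\<^sup>+x. ennreal (\<rho> x) \<partial>lborel) = 1"
    by (simp add: emeasure_density)
  have int: "integrable lborel \<rho>"
    by (rule integrableI_nonneg) (use nn one in auto)
  interpret d1: dens \<rho> by unfold_locales (fact m, fact int)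
  define Dens where "Dens t = (\<integral>\<^sup>+d. ennreal (\<rho> d) * KK d t \<partial>lborel)" for t
  have Dm: "Dens \<in> borel_measurable lborel" unfolding Dens_def by (rule Dens_meas[OF m])
  have dd: "?M = density lborel Dens"
    using de distr_eq[OF m] unfolding Dens_def by simp
  have em: "(\<lambda>x. ennreal (\<rho> x)) \<in> borel_measurable lborel" by measurable
  have ae1: "AE x in lborel. ennreal (\<rho> x) = Dens x"
    by (rule sigma_finite_measure.density_unique[OF lborel.sigma_finite_measure_axioms em Dm dd])
  have DR: "Dens t = ennreal (d1.R0 t)" if "t \<noteq> 0" for t
  proof -
    have "Dens t = (\<integral>\<^sup>+d. ennreal (\<rho> d * kr d t) \<partial>lborel)"
      unfolding Dens_def by (rule nn_integral_cong) (use that nn kr_nonneg in \<open>simp add: KK_eq ennreal_mult\<close>)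
    also have "\<dots> = ennreal (d1.R0 t)"
      unfolding d1.R0_def
    proof (rule nn_integral_eq_integral)
      show "integrable lborel (\<lambda>d. \<rho> d * kr d t)"
        by (rule bint[OF int, where C=1]) (use kr_nonneg kr_le1 in \<open>auto simp: abs_le_iff\<close>)
      show "AE d in lborel. 0 \<le> \<rho> d * kr d t"
        using nn kr_nonneg by simp
    qed
    finally show ?thesis .
  qed
  have R0nn: "0 \<le> d1.R0 t" for t
    unfolding d1.R0_def by (rule integral_nonneg_AE) (use nn kr_nonneg in simp)
  have ae: "AE x in lborel. \<rho> x = d1.R0 x"
    using ae1 AE_lborel_singleton[of 0]
  proof eventually_elim
    case (elim x)
    then have "ennreal (\<rho> x) = ennreal (d1.R0 x)" using DR by simp
    then show ?case using nn R0nn by (simp add: ennreal_inj)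
  qed
  interpret d2: dens2 \<rho> by unfold_locales (fact ae)
  show ?thesis
    using ae d2.pos_case d2.neg_case d2.ode_pos d2.ode_neg by blast
qed

end
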